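(* Let $G$ be a graph on $n$ vertices with a Hamilton cycle $C$, let $k\ge 2$ divide $n$, let $s \ge n/k$, and let $\Pi$ be a noncanonical $(k,s)$-BCP of $G$, with spanning trees $T_i$, centers $c_i$ and heavy/light fragments fixed as in the context. If some light fragment of a large district is adjacent along $C$ (i.e., joined by an edge of $C$) to a vertex of a small district, then there is a single recombination move producing a $(k,s)$-BCP whose total number of fragments is strictly smaller than that of $\Pi$.
   Context: A $(k,s)$-BCP of a graph $G$ on $n$ vertices is a partition of $V(G)$ into $k$ nonempty sets (districts), each inducing a connected subgraph, with $\big||U|-n/k\big|\le s$ for every district $U$. A recombination move replaces two districts $V_i,V_j$ by two sets $W_i,W_j$ with $W_i\cup W_j=V_i\cup V_j$ such that the result is again a $(k,s)$-BCP (different from the original), leaving other districts unchanged. Given a Hamilton cycle $C$: the partition is canonical if every district consists of consecutive vertices along $C$. A fragment of a district $V_i$ is a maximal subset of $V_i$ of vertices contiguous along $C$; $f_i$ denotes the number of fragments of $V_i$, and the total number of fragments is $\sum_i f_i$. A district is small if $|V_i|\le n/k$ and large otherwise. An edge of $G$ not on $C$ is a chord. For each $i$, $T_i$ is a fixed spanning tree of $G[V_i]$ with the minimum number of chords (it consists of the $f_i$ paths along $C$ plus $f_i-1$ chords), and $c_i$ is a fixed center of $T_i$, i.e., a vertex such that every component of $T_i-c_i$ has at most $|V_i|/2$ vertices. The fragment of $V_i$ containing $c_i$ is heavy; the others are light. *)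

theory Defs
  imports Complex_Main
begin

definition simple_graph :: "'a set \<Rightarrow> ('a \<Rightarrow> 'a \<Rightarrow> bool) \<Rightarrow> bool" where
  "simple_graph V E \<longleftrightarrow> finite V \<and> (\<forall>u v. E u v \<longrightarrow> E v u) \<and> (\<forall>u. \<not> E u u)
     \<and> (\<forall>u v. E u v \<longrightarrow> u \<in> V \<and> v \<in> V)"

definition hamilton_cycle :: "'a set \<Rightarrow> ('a \<Rightarrow> 'a \<Rightarrow> bool) \<Rightarrow> 'a list \<Rightarrow> bool" where
  "hamilton_cycle V E C \<longleftrightarrow> distinct C \<and> set C = V \<and> length C \<ge> 3
     \<and> (\<forall>i < length C. E (C ! i) (C ! ((i + 1) mod length C)))"

definition cedge :: "'a list \<Rightarrow> 'a \<Rightarrow> 'a \<Rightarrow> bool" where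
  "cedge C u v \<longleftrightarrow> (\<exists>i < length C. {u, v} = {C ! i, C ! ((i + 1) mod length C)})"

definition reach :: "('a \<Rightarrow> 'a \<Rightarrow> bool) \<Rightarrow> 'a set \<Rightarrow> 'a \<Rightarrow> 'a \<Rightarrow> bool" where
  "reach R S x y \<longleftrightarrow> (x, y) \<in> {(a, b). a \<in> S \<and> b \<in> S \<and> R a b}\<^sup>*"

definition connected_on :: "('a \<Rightarrow> 'a \<Rightarrow> bool) \<Rightarrow> 'a set \<Rightarrow> bool" where
  "connected_on R S \<longleftrightarrow> S \<noteq> {} \<and> (\<forall>x\<in>S. \<forall>y\<in>S. reach R S x y)"

definition comps :: "('a \<Rightarrow> 'a \<Rightarrow> bool) \<Rightarrow> 'a set \<Rightarrow> 'a set set" where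
  "comps R S = (\<lambda>x. {y \<in> S. reach R S x y}) ` S"

definition is_BCP :: "'a set \<Rightarrow> ('a \<Rightarrow> 'a \<Rightarrow> bool) \<Rightarrow> nat \<Rightarrow> real \<Rightarrow> (nat \<Rightarrow> 'a set) \<Rightarrow> bool" where
  "is_BCP V E k s P \<longleftrightarrow>
     (\<forall>i < k. P i \<noteq> {} \<and> P i \<subseteq> V \<and> connected_on E (P i)
              \<and> \<bar>real (card (P i)) - real (card V) / real k\<bar> \<le> s)
     \<and> (\<forall>i < k. \<forall>j < k. i \<noteq> j \<longrightarrow> P i \<inter> P j = {})
     \<and> (\<Union>i<k. P i) = V"

definition recomb_move :: "'a set \<Rightarrow> ('a \<Rightarrow> 'a \<Rightarrow> bool) \<Rightarrow> nat \<Rightarrow> real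
     \<Rightarrow> (nat \<Rightarrow> 'a set) \<Rightarrow> nat \<Rightarrow> nat \<Rightarrow> (nat \<Rightarrow> 'a set) \<Rightarrow> bool" where
  "recomb_move V E k s P i j P' \<longleftrightarrow>
     i < k \<and> j < k \<and> i \<noteq> j
     \<and> P' i \<union> P' j = P i \<union> P j
     \<and> (\<forall>l < k. l \<noteq> i \<and> l \<noteq> j \<longrightarrow> P' l = P l)
     \<and> is_BCP V E k s P'
     \<and> P' ` {..<k} \<noteq> P ` {..<k}"

text \<open>Fragments of a set D: maximal C-contiguous subsets, i.e. components of D w.r.t. cycle edges.\<close>
definition fragments :: "'a list \<Rightarrow> 'a set \<Rightarrow> 'a set set" where
  "fragments C D = comps (cedge C) D"

definition total_fragments :: "'a list \<Rightarrow> nat \<Rightarrow> (nat \<Rightarrow> 'a set) \<Rightarrow> nat" where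
  "total_fragments C k P = (\<Sum>i<k. card (fragments C (P i)))"

text \<open>Canonical: every district consists of consecutive vertices along C (a single fragment).\<close>
definition canonical :: "'a list \<Rightarrow> nat \<Rightarrow> (nat \<Rightarrow> 'a set) \<Rightarrow> bool" where
  "canonical C k P \<longleftrightarrow> (\<forall>i < k. card (fragments C (P i)) = 1)"

text \<open>Trees are given as sets of edges, each edge a 2-element set.\<close>
definition tedge :: "'a set set \<Rightarrow> 'a \<Rightarrow> 'a \<Rightarrow> bool" where
  "tedge T u v \<longleftrightarrow> u \<noteq> v \<and> {u, v} \<in> T"

definition spanning_tree :: "('a \<Rightarrow> 'a \<Rightarrow> bool) \<Rightarrow> 'a set \<Rightarrow> 'a set set \<Rightarrow> bool" where
  "spanning_tree E S T \<longleftrightarrow>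
     T \<subseteq> {{u, v} | u v. u \<in> S \<and> v \<in> S \<and> E u v}
     \<and> connected_on (tedge T) S \<and> card T + 1 = card S"

definition chords :: "'a list \<Rightarrow> 'a set set \<Rightarrow> 'a set set" where
  "chords C T = {e \<in> T. \<not> (\<exists>u v. e = {u, v} \<and> cedge C u v)}"

definition min_chord_spanning_tree :: "('a \<Rightarrow> 'a \<Rightarrow> bool) \<Rightarrow> 'a list \<Rightarrow> 'a set \<Rightarrow> 'a set set \<Rightarrow> bool" where
  "min_chord_spanning_tree E C S T \<longleftrightarrow> spanning_tree E S T
     \<and> (\<forall>T'. spanning_tree E S T' \<longrightarrow> card (chords C T) \<le> card (chords C T'))"

definition tree_center :: "'a set \<Rightarrow> 'a set set \<Rightarrow> 'a \<Rightarrow> bool" where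
  "tree_center S T c \<longleftrightarrow> c \<in> S
     \<and> (\<forall>K \<in> comps (tedge T) (S - {c}). real (card K) \<le> real (card S) / 2)"

end

theory Submission
  imports Defs
begin

definition compo :: "('a \<Rightarrow> 'a \<Rightarrow> bool) \<Rightarrow> 'a set \<Rightarrow> 'a \<Rightarrow> 'a set" where
  "compo R S x = {y \<in> S. reach R S x y}"

lemma comps_compo: "comps R S = compo R S ` S"
  unfolding comps_def compo_def by simp

lemma reach_refl[simp]: "reach R S x x"
  unfolding reach_def by simp

lemma reach_step: "reach R S x y \<Longrightarrow> y \<in> S \<Longrightarrow> z \<in> S \<Longrightarrow> R y z \<Longrightarrow> reach R S x z"
proof -
  assume a: "reach R S x y" "y \<in> S" "z \<in> S" "R y z"
  have "(y, z) \<in> {(a, b). a \<in> S \<and> b \<in> S \<and> R a b}" using a by simp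
  with a(1) show ?thesis unfolding reach_def by (rule rtrancl.rtrancl_into_rtrancl)
qed

lemma reach_edge: "x \<in> S \<Longrightarrow> y \<in> S \<Longrightarrow> R x y \<Longrightarrow> reach R S x y"
  unfolding reach_def by (simp add: r_into_rtrancl)

lemma reach_trans: "reach R S x y \<Longrightarrow> reach R S y z \<Longrightarrow> reach R S x z"
  unfolding reach_def by (rule rtrancl_trans)

lemma reach_mem: "reach R S x y \<Longrightarrow> x \<noteq> y \<Longrightarrow> x \<in> S \<and> y \<in> S"
  unfolding reach_def by (induction rule: rtrancl_induct) auto

lemma reach_mem2: "reach R S x y \<Longrightarrow> x \<in> S \<Longrightarrow> y \<in> S"
  using reach_mem by fastforce

lemma reach_sym: assumes "\<And>a b. R a b \<Longrightarrow> R b a" "reach R S x y" shows "reach R S y x"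
proof -
  have "(x, y) \<in> {(a, b). a \<in> S \<and> b \<in> S \<and> R a b}\<^sup>*" using assms(2) unfolding reach_def .
  then have "(y, x) \<in> ({(a, b). a \<in> S \<and> b \<in> S \<and> R a b}\<^sup>*)\<inverse>" by simp
  also have "({(a, b). a \<in> S \<and> b \<in> S \<and> R a b}\<^sup>*)\<inverse> = ({(a, b). a \<in> S \<and> b \<in> S \<and> R a b}\<inverse>)\<^sup>*"
    by (simp add: rtrancl_converse)
  also have "{(a, b). a \<in> S \<and> b \<in> S \<and> R a b}\<inverse> = {(a, b). a \<in> S \<and> b \<in> S \<and> R a b}"
    using assms(1) by blast
  finally show ?thesis unfolding reach_def .
qed

lemma reach_mono: assumes "reach R S x y" "\<And>a b. a \<in> S \<Longrightarrow> b \<in> S \<Longrightarrow> R a b \<Longrightarrow> R' a b" "S \<subseteq> S'"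
  shows "reach R' S' x y"
proof -
  have "{(a, b). a \<in> S \<and> b \<in> S \<and> R a b} \<subseteq> {(a, b). a \<in> S' \<and> b \<in> S' \<and> R' a b}"
    using assms(2,3) by auto
  from rtrancl_mono[OF this] show ?thesis using assms(1) unfolding reach_def by (rule subsetD)
qed

lemma reach_closed:
  assumes "reach R D x y" "x \<in> X" "X \<subseteq> D" "\<And>a b. a \<in> X \<Longrightarrow> b \<in> D \<Longrightarrow> R a b \<Longrightarrow> b \<in> X"
  shows "y \<in> X \<and> reach R X x y"
proof -
  have "(x, y) \<in> {(a, b). a \<in> D \<and> b \<in> D \<and> R a b}\<^sup>*" using assms(1) unfolding reach_def .
  then show ?thesis
  proof (induction rule: rtrancl_induct)
    case base then show ?case using assms(2) by simp
  next
    case (step y z)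
    from step(2) have "z \<in> D" "R y z" by simp_all
    from step(3) have yX: "y \<in> X" and r: "reach R X x y" by simp_all
    have zX: "z \<in> X" using assms(4)[OF yX \<open>z \<in> D\<close> \<open>R y z\<close>] .
    have "reach R X x z" by (rule reach_step[OF r yX zX \<open>R y z\<close>])
    then show ?case using zX by simp
  qed
qed

lemma compo_eq: assumes "\<And>a b. R a b \<Longrightarrow> R b a" "reach R S x y" shows "compo R S x = compo R S y"
proof -
  have "reach R S y x" using reach_sym[OF assms] .
  then show ?thesis unfolding compo_def using assms(2) reach_trans[of R S x y] reach_trans[of R S y x] by auto
qed

lemma compo_self: "x \<in> S \<Longrightarrow> x \<in> compo R S x"
  unfolding compo_def by simp

lemma connected_reach: assumes "\<And>a b. R a b \<Longrightarrow> R b a" "x0 \<in> S" "\<And>y. y \<in> S \<Longrightarrow> reach R S x0 y"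
  shows "connected_on R S"
  unfolding connected_on_def
proof (intro conjI ballI)
  show "S \<noteq> {}" using assms(2) by auto
  fix x y assume "x \<in> S" "y \<in> S"
  have "reach R S x x0" using reach_sym[OF assms(1) assms(3)[OF \<open>x \<in> S\<close>]] .
  then show "reach R S x y" using reach_trans assms(3)[OF \<open>y \<in> S\<close>] by metis
qed

lemma connected_closed:
  assumes "connected_on R S" "X \<subseteq> S" "x \<in> X" "\<And>a b. a \<in> X \<Longrightarrow> b \<in> S \<Longrightarrow> R a b \<Longrightarrow> b \<in> X"
  shows "X = S"
proof
  show "S \<subseteq> X"
  proof
    fix y assume "y \<in> S"
    have "reach R S x y" using assms(1,2,3) \<open>y \<in> S\<close> unfolding connected_on_def by auto
    from reach_closed[OF this assms(3) assms(2) assms(4)] show "y \<in> X" by simp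
  qed
qed (rule assms(2))

lemma comps_connected: assumes "connected_on R S" shows "comps R S = {S}"
proof -
  have "compo R S x = S" if "x \<in> S" for x
    using assms that unfolding connected_on_def compo_def by auto
  moreover have "S \<noteq> {}" using assms unfolding connected_on_def by auto
  ultimately show ?thesis unfolding comps_compo by auto
qed


definition eds :: "'a set \<Rightarrow> 'a set set \<Rightarrow> bool" where
  "eds S T \<longleftrightarrow> (\<forall>e\<in>T. \<exists>x y. e = {x, y} \<and> x \<noteq> y \<and> x \<in> S \<and> y \<in> S)"

lemma tedge_sym: "tedge T a b \<Longrightarrow> tedge T b a"
  unfolding tedge_def by (auto simp: insert_commute)

lemma tedge_insert: "tedge (insert {a, b} F) x y \<longleftrightarrow> tedge F x y \<or> (x \<noteq> y \<and> {x, y} = {a, b})"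
  unfolding tedge_def by auto

lemma tedge_mono: "F \<subseteq> F' \<Longrightarrow> tedge F x y \<Longrightarrow> tedge F' x y"
  unfolding tedge_def by auto

lemma reach_tedge_mono: "reach (tedge F) S x y \<Longrightarrow> F \<subseteq> F' \<Longrightarrow> reach (tedge F') S x y"
  by (rule reach_mono[where R="tedge F"]) (auto intro: tedge_mono)

lemma ins_reach:
  assumes "reach (tedge (insert {a, b} F)) S x y"
  shows "reach (tedge F) S x y \<or> (reach (tedge F) S x a \<and> reach (tedge F) S b y)
         \<or> (reach (tedge F) S x b \<and> reach (tedge F) S a y)"
proof -
  have "(x, y) \<in> {(u, v). u \<in> S \<and> v \<in> S \<and> tedge (insert {a, b} F) u v}\<^sup>*"
    using assms unfolding reach_def .
  then show ?thesis
  proof (induction rule: rtrancl_induct)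
    case base then show ?case by simp
  next
    case (step y z)
    from step(2) have yz: "y \<in> S" "z \<in> S" "tedge (insert {a, b} F) y z" by simp_all
    show ?case
    proof (cases "tedge F y z")
      case True
      have yzr: "reach (tedge F) S y z" by (rule reach_edge[where R="tedge F", OF yz(1,2) True])
      show ?thesis using step(3) reach_trans[OF _ yzr] by blast
    next
      case False
      then have "(y = a \<and> z = b) \<or> (y = b \<and> z = a)" using yz(3) unfolding tedge_insert
        by (auto simp: doubleton_eq_iff)
      then show ?thesis
      proof
        assume "y = a \<and> z = b"
        then show ?thesis using step(3) by (metis reach_refl)
      next
        assume "y = b \<and> z = a"
        then show ?thesis using step(3) by (metis reach_refl)
      qed
    qed
  qed
qed

lemma ins_same_comps:
  assumes "reach (tedge F) S a b"
  shows "comps (tedge (insert {a, b} F)) S = comps (tedge F) S"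
proof -
  have "reach (tedge (insert {a, b} F)) S x y \<longleftrightarrow> reach (tedge F) S x y" for x y
  proof
    assume "reach (tedge (insert {a, b} F)) S x y"
    from ins_reach[OF this] show "reach (tedge F) S x y"
      using assms reach_sym[OF tedge_sym assms] reach_trans by metis
  next
    assume "reach (tedge F) S x y"
    then show "reach (tedge (insert {a, b} F)) S x y" by (rule reach_tedge_mono) auto
  qed
  then show ?thesis unfolding comps_def by simp
qed

lemma finite_comps: "finite S \<Longrightarrow> finite (comps R S)"
  unfolding comps_def by simp

lemma compo_in_comps: "x \<in> S \<Longrightarrow> compo R S x \<in> comps R S"
  unfolding comps_compo by simp

lemma ins_comps_card:
  assumes "finite S" "a \<in> S" "b \<in> S"
  shows "card (comps (tedge F) S) \<le> card (comps (tedge (insert {a, b} F)) S) + 1"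
proof -
  let ?F' = "insert {a, b} F"
  let ?c = "compo (tedge F) S" and ?c' = "compo (tedge ?F') S"
  have sub: "comps (tedge F) S \<subseteq> (comps (tedge ?F') S - {?c' a}) \<union> {?c a, ?c b}"
  proof
    fix K assume "K \<in> comps (tedge F) S"
    then obtain x where x: "x \<in> S" "K = ?c x" unfolding comps_compo by blast
    show "K \<in> (comps (tedge ?F') S - {?c' a}) \<union> {?c a, ?c b}"
    proof (cases "reach (tedge F) S x a \<or> reach (tedge F) S x b")
      case True
      then have "K = ?c a \<or> K = ?c b"
      proof
        assume "reach (tedge F) S x a"
        from compo_eq[of "tedge F", OF tedge_sym this] show ?thesis using x(2) by simp
      next
        assume "reach (tedge F) S x b"
        from compo_eq[of "tedge F", OF tedge_sym this] show ?thesis using x(2) by simp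
      qed
      then show ?thesis by blast
    next
      case False
      have eq: "reach (tedge ?F') S x y \<longleftrightarrow> reach (tedge F) S x y" for y
        using ins_reach[of a b F S x y] False reach_tedge_mono[of F S x y ?F'] by auto
      have "K = ?c' x" using x eq unfolding compo_def by blast
      moreover have "a \<notin> ?c' x" using eq False unfolding compo_def by blast
      moreover have "a \<in> ?c' a" using assms(2) by (rule compo_self)
      ultimately have "K \<noteq> ?c' a" by auto
      moreover have "K \<in> comps (tedge ?F') S" unfolding \<open>K = ?c' x\<close> using x(1) by (rule compo_in_comps)
      ultimately show ?thesis by blast
    qed
  qed
  have fin: "finite (comps (tedge ?F') S)" using assms(1) by (rule finite_comps)
  have mem: "?c' a \<in> comps (tedge ?F') S" using assms(2) by (rule compo_in_comps)
  have "card (comps (tedge F) S) \<le> card ((comps (tedge ?F') S - {?c' a}) \<union> {?c a, ?c b})"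
    using sub fin by (intro card_mono) auto
  also have "\<dots> \<le> card (comps (tedge ?F') S - {?c' a}) + card {?c a, ?c b}"
    by (rule card_Un_le)
  also have "\<dots> \<le> card (comps (tedge ?F') S - {?c' a}) + 2"
    by (simp add: card_insert_le_m1)
  also have "card (comps (tedge ?F') S - {?c' a}) = card (comps (tedge ?F') S) - 1"
    using mem by (rule card_Diff_singleton)
  finally have le: "card (comps (tedge F) S) \<le> card (comps (tedge ?F') S) - 1 + 2" .
  have "card (comps (tedge ?F') S) > 0" using mem fin card_gt_0_iff by blast
  then show ?thesis using le by arith
qed

lemma comps_empty: "comps (tedge {}) S = (\<lambda>x. {x}) ` S"
proof -
  have "reach (tedge {}) S x y \<longleftrightarrow> x = y" for x y
    unfolding reach_def tedge_def by simp
  then show ?thesis unfolding comps_compo compo_def by auto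
qed

lemma card_comps_empty: "card (comps (tedge {}) S) = card S"
  unfolding comps_empty by (simp add: card_image)

lemma comps_add_edges:
  assumes "finite S" "finite D" "eds S D"
  shows "card (comps (tedge F) S) \<le> card (comps (tedge (F \<union> D)) S) + card D"
  using assms(2,3)
proof (induction D rule: finite_induct)
  case empty then show ?case by simp
next
  case (insert e D)
  then have "eds S D" unfolding eds_def by auto
  with insert have IH: "card (comps (tedge F) S) \<le> card (comps (tedge (F \<union> D)) S) + card D" by blast
  obtain a b where ab: "e = {a, b}" "a \<in> S" "b \<in> S" using insert(4) unfolding eds_def by auto
  have "card (comps (tedge (F \<union> D)) S) \<le> card (comps (tedge (insert {a, b} (F \<union> D))) S) + 1"
    using ins_comps_card[OF assms(1) ab(2,3)] .
  moreover have "F \<union> insert e D = insert {a, b} (F \<union> D)" using ab by auto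
  ultimately show ?case using IH insert(1,2) by simp
qed

lemma forest_formula:
  assumes "finite S" "finite T" "eds S T" "connected_on (tedge T) S" "card T + 1 = card S" "F \<subseteq> T"
  shows "card (comps (tedge F) S) + card F = card S"
proof -
  have fF: "finite F" using assms(2,6) finite_subset by blast
  have eF: "eds S F" using assms(3,6) unfolding eds_def by auto
  have "card S \<le> card (comps (tedge F) S) + card F"
    using comps_add_edges[OF assms(1) fF eF, of "{}"] card_comps_empty[of S] by simp
  moreover have "card (comps (tedge F) S) \<le> card (comps (tedge (F \<union> (T - F))) S) + card (T - F)"
    using comps_add_edges[OF assms(1), of "T - F" F] assms(2,3) unfolding eds_def by auto
  moreover have "F \<union> (T - F) = T" using assms(6) by auto
  ultimately have "card (comps (tedge F) S) \<le> card (comps (tedge T) S) + card (T - F)" by simp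
  moreover have "card (comps (tedge T) S) = 1" using comps_connected[OF assms(4)] by simp
  moreover have "card (T - F) = card T - card F" using assms(2,6) fF by (simp add: card_Diff_subset)
  moreover have "card F \<le> card T" using assms(2,6) card_mono by blast
  ultimately show ?thesis using assms(5) \<open>card S \<le> card (comps (tedge F) S) + card F\<close> by linarith
qed


section \<open>Cycle arithmetic\<close>

definition rk :: "nat \<Rightarrow> nat \<Rightarrow> nat \<Rightarrow> nat" where
  "rk L i m = (if i < m then m - Suc i else m + L - Suc i)"

lemma suc_mod: "(j::nat) < L \<Longrightarrow> (j + 1) mod L = (if j + 1 < L then j + 1 else 0)"
proof (cases "j + 1 < L")
  case True then show ?thesis using mod_less[OF True] by simp
next
  case False
  assume "j < L"
  with False have "j + 1 = L" by simp
  then show ?thesis by simp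
qed

lemma rk_lt: "i < L \<Longrightarrow> m < L \<Longrightarrow> rk L i m < L"
  unfolding rk_def by auto

lemma rk_inj: "i < L \<Longrightarrow> m < L \<Longrightarrow> m' < L \<Longrightarrow> rk L i m = rk L i m' \<Longrightarrow> m = m'"
  unfolding rk_def by (auto split: if_splits)

lemma rk_succ: "i < L \<Longrightarrow> j < L \<Longrightarrow> j \<noteq> i \<Longrightarrow> rk L i ((j + 1) mod L) = rk L i j + 1"
  unfolding suc_mod rk_def by (auto split: if_splits)

lemma rk_start: "i < L \<Longrightarrow> rk L i ((i + 1) mod L) = 0"
  unfolding suc_mod rk_def by (auto split: if_splits)

lemma rk_end: "i < L \<Longrightarrow> rk L i i = L - 1"
  unfolding rk_def by auto

lemma cycle_sep:
  assumes dC: "distinct C" and iL: "i < length C"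
    and pq: "p = C ! i" "q = C ! ((i + 1) mod length C)"
    and qS: "q \<in> S"
    and r: "reach (\<lambda>x y. cedge C x y \<and> {x, y} \<noteq> {p, q}) S q p"
  shows "set C \<subseteq> S"
proof -
  let ?L = "length C"
  let ?R = "\<lambda>x y. cedge C x y \<and> {x, y} \<noteq> {p, q}"
  define Inv where "Inv x \<longleftrightarrow> (\<exists>n < ?L. x = C ! n \<and> (\<forall>m < ?L. rk ?L i m \<le> rk ?L i n \<longrightarrow> C ! m \<in> S))" for x
  have L0: "0 < ?L" using iL by linarith
  have "(q, p) \<in> {(a, b). a \<in> S \<and> b \<in> S \<and> ?R a b}\<^sup>*" using r unfolding reach_def .
  then have "Inv p"
  proof (induction rule: rtrancl_induct)
    case base
    have n: "(i + 1) mod ?L < ?L" using L0 by simp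
    have "C ! m \<in> S" if "m < ?L" "rk ?L i m \<le> rk ?L i ((i + 1) mod ?L)" for m
    proof -
      have "rk ?L i m = rk ?L i ((i + 1) mod ?L)" using that(2) rk_start[OF iL] by simp
      then have "m = (i + 1) mod ?L" using rk_inj[OF iL that(1) n] by simp
      then show ?thesis using qS pq(2) by simp
    qed
    then show ?case unfolding Inv_def using n pq(2) by blast
  next
    case (step x z)
    from step(2) have zS: "z \<in> S" and cz: "cedge C x z" and ne: "{x, z} \<noteq> {p, q}" by simp_all
    from step(3) obtain n where n: "n < ?L" "x = C ! n"
      and all: "\<forall>m < ?L. rk ?L i m \<le> rk ?L i n \<longrightarrow> C ! m \<in> S" unfolding Inv_def by blast
    from cz obtain j where j: "j < ?L" "{x, z} = {C ! j, C ! ((j + 1) mod ?L)}" unfolding cedge_def by blast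
    have ji: "j \<noteq> i" using ne j(2) pq by auto
    have j1: "(j + 1) mod ?L < ?L" using L0 by simp
    have rs: "rk ?L i ((j + 1) mod ?L) = rk ?L i j + 1" by (rule rk_succ[OF iL j(1) ji])
    have "(x = C ! j \<and> z = C ! ((j + 1) mod ?L)) \<or> (x = C ! ((j + 1) mod ?L) \<and> z = C ! j)"
      using j(2) by (auto simp: doubleton_eq_iff)
    then show ?case
    proof
      assume a: "x = C ! j \<and> z = C ! ((j + 1) mod ?L)"
      then have nj: "n = j" using n dC j(1) nth_eq_iff_index_eq by metis
      have "C ! m \<in> S" if "m < ?L" "rk ?L i m \<le> rk ?L i ((j + 1) mod ?L)" for m
      proof (cases "rk ?L i m \<le> rk ?L i n")
        case True then show ?thesis using all that(1) by blast
      next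
        case False
        then have "rk ?L i m = rk ?L i ((j + 1) mod ?L)" using that(2) rs nj by simp
        then have "m = (j + 1) mod ?L" using rk_inj[OF iL that(1) j1] by simp
        then show ?thesis using zS a by simp
      qed
      then show ?case unfolding Inv_def using j1 a by blast
    next
      assume a: "x = C ! ((j + 1) mod ?L) \<and> z = C ! j"
      then have nj: "n = (j + 1) mod ?L" using n dC j1 nth_eq_iff_index_eq by metis
      have "\<forall>m < ?L. rk ?L i m \<le> rk ?L i j \<longrightarrow> C ! m \<in> S" using all nj rs by auto
      then show ?case unfolding Inv_def using j(1) a by blast
    qed
  qed
  then obtain n where n: "n < ?L" "p = C ! n" and all: "\<forall>m < ?L. rk ?L i m \<le> rk ?L i n \<longrightarrow> C ! m \<in> S"
    unfolding Inv_def by blast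
  have "n = i" using n pq(1) dC iL nth_eq_iff_index_eq by metis
  then have "\<forall>m < ?L. C ! m \<in> S" using all rk_end[OF iL] rk_lt[OF iL] by fastforce
  then show ?thesis by (auto simp: in_set_conv_nth)
qed


section \<open>Tree exchange\<close>

locale stree =
  fixes S :: "'a set" and T :: "'a set set"
  assumes fS: "finite S" and fT: "finite T" and eT: "eds S T"
    and cT: "connected_on (tedge T) S" and cardT: "card T + 1 = card S"
begin

lemma comps_minus1: assumes "e \<in> T" shows "card (comps (tedge (T - {e})) S) = 2"
proof -
  have "card (comps (tedge (T - {e})) S) + card (T - {e}) = card S"
    by (rule forest_formula[OF fS fT eT cT cardT]) auto
  moreover have "card (T - {e}) = card T - 1" using assms by simp
  moreover have "card T > 0" using assms fT card_gt_0_iff by blast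
  ultimately show ?thesis using cardT by linarith
qed

lemma sep_chords:
  assumes "D \<subseteq> T" "\<forall>e\<in>D. reach (tedge (T - {e})) S u v" "reach (tedge T) S u v"
  shows "reach (tedge (T - D)) S u v"
proof -
  have "finite D" using assms(1) fT finite_subset by blast
  then show ?thesis using assms
  proof (induction D rule: finite_induct)
    case empty then show ?case by simp
  next
    case (insert e D)
    then have IH: "reach (tedge (T - D)) S u v" by blast
    have eT': "e \<in> T" using insert(4) by blast
    obtain a b where ab: "e = {a, b}" "a \<noteq> b" "a \<in> S" "b \<in> S" using eT eT' unfolding eds_def by blast
    let ?G = "T - insert e D"
    have TD: "T - D = insert {a, b} ?G" using ab(1) eT' insert(2) by auto
    show ?case
    proof (rule ccontr)
      assume nr: "\<not> reach (tedge (T - insert e D)) S u v"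
      have re: "reach (tedge (T - {e})) S u v" using insert(5) by blast
      have sub: "?G \<subseteq> T - {e}" by auto
      have IH': "reach (tedge (insert {a, b} ?G)) S u v" using IH unfolding TD .
      have dis: "reach (tedge ?G) S u v \<or> (reach (tedge ?G) S u a \<and> reach (tedge ?G) S b v) \<or> (reach (tedge ?G) S u b \<and> reach (tedge ?G) S a v)"
        by (rule ins_reach[OF IH'])
      from dis nr
      have "(reach (tedge ?G) S u a \<and> reach (tedge ?G) S b v) \<or> (reach (tedge ?G) S u b \<and> reach (tedge ?G) S a v)"
        apply (elim disjE)
          apply (erule notE[OF nr])
         apply (erule disjI1)
        apply (erule disjI2)
        done
      then have "reach (tedge (T - {e})) S a b"
      proof (rule disjE)
        assume h: "reach (tedge ?G) S u a \<and> reach (tedge ?G) S b v"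
        have ua: "reach (tedge (T - {e})) S u a" using reach_tedge_mono[OF conjunct1[OF h] sub] .
        have bv: "reach (tedge (T - {e})) S b v" using reach_tedge_mono[OF conjunct2[OF h] sub] .
        have 1: "reach (tedge (T - {e})) S a u" using reach_sym[OF tedge_sym ua] .
        have 2: "reach (tedge (T - {e})) S v b" using reach_sym[OF tedge_sym bv] .
        show ?thesis using reach_trans[OF reach_trans[OF 1 re] 2] .
      next
        assume h: "reach (tedge ?G) S u b \<and> reach (tedge ?G) S a v"
        have 2: "reach (tedge (T - {e})) S u b" using reach_tedge_mono[OF conjunct1[OF h] sub] .
        have 1: "reach (tedge (T - {e})) S a v" using reach_tedge_mono[OF conjunct2[OF h] sub] .
        have 3: "reach (tedge (T - {e})) S v u" using reach_sym[OF tedge_sym re] .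
        show ?thesis using reach_trans[OF reach_trans[OF 1 3] 2] .
      qed
      from ins_same_comps[OF this] have "comps (tedge (insert {a, b} (T - {e}))) S = comps (tedge (T - {e})) S" .
      moreover have "insert {a, b} (T - {e}) = T" using ab(1) eT' by auto
      ultimately have "comps (tedge T) S = comps (tedge (T - {e})) S" by simp
      then have "card (comps (tedge T) S) = 2" using comps_minus1[OF eT'] by simp
      then show False using comps_connected[OF cT] by simp
    qed
  qed
qed

lemma exchange:
  assumes eT': "e \<in> T" and nr: "\<not> reach (tedge (T - {e})) S u v" and uS: "u \<in> S" and vS: "v \<in> S"
    and uv: "u \<noteq> v" and nT: "{u, v} \<notin> T"
  shows "connected_on (tedge (insert {u, v} (T - {e}))) S \<and> card (insert {u, v} (T - {e})) + 1 = card S"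
proof
  let ?F = "T - {e}" and ?F' = "insert {u, v} (T - {e})"
  let ?c = "compo (tedge ?F) S"
  have 2: "card (comps (tedge ?F) S) = 2" by (rule comps_minus1[OF eT'])
  have ne: "?c u \<noteq> ?c v"
  proof
    assume h: "?c u = ?c v"
    have "v \<in> ?c u" unfolding h by (rule compo_self[OF vS])
    then have "reach (tedge ?F) S u v" unfolding compo_def by simp
    then show False using nr by (rule notE[rotated])
  qed
  have sub: "{?c u, ?c v} \<subseteq> comps (tedge ?F) S"
    unfolding insert_subset using compo_in_comps[OF uS] compo_in_comps[OF vS] by simp
  have fin: "finite (comps (tedge ?F) S)" using fS by (rule finite_comps)
  have eq: "{?c u, ?c v} = comps (tedge ?F) S"
    using card_subset_eq[OF fin sub] ne 2 by simp
  have ruv: "reach (tedge ?F') S u v" by (rule reach_edge) (use uS vS uv in \<open>auto simp: tedge_def\<close>)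
  show "connected_on (tedge ?F') S"
  proof (rule connected_reach[OF tedge_sym uS])
    fix y assume yS: "y \<in> S"
    have "?c y \<in> {?c u, ?c v}" unfolding eq by (rule compo_in_comps[OF yS])
    then have "?c y = ?c u \<or> ?c y = ?c v" by simp
    moreover have yy: "y \<in> ?c y" using compo_self[OF yS] .
    ultimately have "reach (tedge ?F) S u y \<or> reach (tedge ?F) S v y"
    proof (elim disjE)
      assume "?c y = ?c u" then have "y \<in> ?c u" using yy by simp
      then show ?thesis unfolding compo_def by simp
    next
      assume "?c y = ?c v" then have "y \<in> ?c v" using yy by simp
      then show ?thesis unfolding compo_def by simp
    qed
    moreover have FF: "?F \<subseteq> ?F'" by (rule subset_insertI)
    ultimately show "reach (tedge ?F') S u y"
    proof (elim disjE)
      assume "reach (tedge ?F) S u y" then show ?thesis using reach_tedge_mono[OF _ FF] by simp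
    next
      assume "reach (tedge ?F) S v y" then have "reach (tedge ?F') S v y" using reach_tedge_mono[OF _ FF] by simp
      then show ?thesis by (rule reach_trans[OF ruv])
    qed
  qed
  have "card ?F' = card ?F + 1" using nT fT by simp
  also have "card ?F = card T - 1" using eT' by simp
  finally have "card ?F' = card T - 1 + 1" .
  moreover have "card T > 0" using eT' fT card_gt_0_iff by blast
  ultimately show "card ?F' + 1 = card S" using cardT by linarith
qed

end


section \<open>Minimal chord trees contain cycle edges\<close>

lemma cedge_sym: "cedge C u v \<Longrightarrow> cedge C v u"
  unfolding cedge_def by (auto simp: insert_commute)

lemma cedge_E:
  assumes sg: "simple_graph V E" and hc: "hamilton_cycle V E C" and c: "cedge C u v"
  shows "E u v"
proof -
  obtain i where i: "i < length C" "{u, v} = {C ! i, C ! ((i + 1) mod length C)}"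
    using c unfolding cedge_def by blast
  have e: "E (C ! i) (C ! ((i + 1) mod length C))" using hc i(1) unfolding hamilton_cycle_def by blast
  have sym: "\<And>a b. E a b \<Longrightarrow> E b a" using sg unfolding simple_graph_def by blast
  from i(2) have "(u = C ! i \<and> v = C ! ((i + 1) mod length C)) \<or> (v = C ! i \<and> u = C ! ((i + 1) mod length C))"
    by (auto simp: doubleton_eq_iff)
  then show ?thesis using e sym by auto
qed

lemma E_neq: "simple_graph V E \<Longrightarrow> E u v \<Longrightarrow> u \<noteq> v"
  unfolding simple_graph_def by auto

lemma st_finite:
  assumes "finite S" "spanning_tree E S T" shows "finite T"
proof -
  have "T \<subseteq> (\<lambda>(u, v). {u, v}) ` (S \<times> S)"
    using assms(2) unfolding spanning_tree_def by auto
  then show ?thesis using assms(1) finite_subset by blast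
qed

lemma st_eds:
  assumes "simple_graph V E" "spanning_tree E S T" shows "eds S T"
  using assms unfolding spanning_tree_def eds_def simple_graph_def by blast

lemma cedge_in_tree:
  assumes sg: "simple_graph V E" and hc: "hamilton_cycle V E C"
    and SV: "S \<subseteq> V" and SnV: "S \<noteq> V"
    and mt: "min_chord_spanning_tree E C S T"
    and uS: "u \<in> S" and vS: "v \<in> S" and cuv: "cedge C u v"
  shows "{u, v} \<in> T"
proof (rule ccontr)
  assume nT: "{u, v} \<notin> T"
  have st: "spanning_tree E S T" using mt unfolding min_chord_spanning_tree_def by blast
  have fS: "finite S" using sg SV finite_subset unfolding simple_graph_def by blast
  have fT: "finite T" by (rule st_finite[OF fS st])
  have eT: "eds S T" by (rule st_eds[OF sg st])
  have cT: "connected_on (tedge T) S" and cardT: "card T + 1 = card S"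
    using st unfolding spanning_tree_def by blast+
  interpret stree S T using fS fT eT cT cardT by unfold_locales
  have Euv: "E u v" by (rule cedge_E[OF sg hc cuv])
  have uv: "u \<noteq> v" by (rule E_neq[OF sg Euv])
  let ?Ch = "chords C T"
  have ChT: "?Ch \<subseteq> T" unfolding chords_def by blast
  have nocyc: "\<not> reach (tedge (T - ?Ch)) S u v"
  proof
    assume r: "reach (tedge (T - ?Ch)) S u v"
    let ?R = "\<lambda>x y. cedge C x y \<and> {x, y} \<noteq> {u, v}"
    have rr: "reach ?R S u v"
    proof (rule reach_mono[OF r])
      fix x y assume "tedge (T - ?Ch) x y"
      then have xy: "x \<noteq> y" "{x, y} \<in> T" "{x, y} \<notin> ?Ch" unfolding tedge_def by auto
      then obtain a b where ab: "{x, y} = {a, b}" "cedge C a b" unfolding chords_def by blast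
      from ab(1) have "(x = a \<and> y = b) \<or> (x = b \<and> y = a)" by (auto simp: doubleton_eq_iff)
      then have "cedge C x y" using ab(2) cedge_sym by metis
      moreover have "{x, y} \<noteq> {u, v}" using xy(2) nT by metis
      ultimately show "?R x y" by simp
    qed simp
    have Rsym: "?R y x" if "?R x y" for x y
      using cedge_sym[of C x y] that by (simp add: insert_commute)
    obtain i where i: "i < length C" "{u, v} = {C ! i, C ! ((i + 1) mod length C)}"
      using cuv unfolding cedge_def by blast
    let ?p = "C ! i" and ?q = "C ! ((i + 1) mod length C)"
    have dC: "distinct C" and setC: "set C = V" using hc unfolding hamilton_cycle_def by blast+
    from i(2) have "(u = ?p \<and> v = ?q) \<or> (u = ?q \<and> v = ?p)" by (auto simp: doubleton_eq_iff)
    then have "set C \<subseteq> S"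
    proof
      assume h: "u = ?p \<and> v = ?q"
      have "reach ?R S v u" by (rule reach_sym[OF Rsym rr])
      then have "reach (\<lambda>x y. cedge C x y \<and> {x, y} \<noteq> {?p, ?q}) S ?q ?p" using h by simp
      then show ?thesis using cycle_sep[OF dC i(1) refl refl] vS h by simp
    next
      assume h: "u = ?q \<and> v = ?p"
      have "{u, v} = {?p, ?q}" using h by (simp add: insert_commute)
      then have "reach (\<lambda>x y. cedge C x y \<and> {x, y} \<noteq> {?p, ?q}) S ?q ?p" using rr h by simp
      then show ?thesis using cycle_sep[OF dC i(1) refl refl] uS h by simp
    qed
    then show False using SV SnV setC by blast
  qed
  have ruvT: "reach (tedge T) S u v" using cT uS vS unfolding connected_on_def by blast
  have "\<not> (\<forall>e\<in>?Ch. reach (tedge (T - {e})) S u v)"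
    using sep_chords[OF ChT _ ruvT] nocyc by blast
  then obtain e where eCh: "e \<in> ?Ch" and nr: "\<not> reach (tedge (T - {e})) S u v" by blast
  have eT': "e \<in> T" using eCh ChT by blast
  let ?T' = "insert {u, v} (T - {e})"
  have ex: "connected_on (tedge ?T') S \<and> card ?T' + 1 = card S"
    by (rule exchange[OF eT' nr uS vS uv nT])
  have "?T' \<subseteq> {{a, b} |a b. a \<in> S \<and> b \<in> S \<and> E a b}"
    using st uS vS Euv unfolding spanning_tree_def by blast
  then have st': "spanning_tree E S ?T'" using ex unfolding spanning_tree_def by blast
  then have le: "card ?Ch \<le> card (chords C ?T')" using mt unfolding min_chord_spanning_tree_def by blast
  have ceq: "chords C ?T' = ?Ch - {e}" unfolding chords_def using cuv by blast
  have fin: "finite ?Ch" using fT ChT finite_subset by blast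
  have c1: "card (?Ch - {e}) = card ?Ch - 1" by (rule card_Diff_singleton[OF eCh])
  have c0: "card ?Ch \<noteq> 0" using fin eCh by auto
  have "card (chords C ?T') < card ?Ch" unfolding ceq c1 using c0 by linarith
  then show False using le by linarith
qed


section \<open>Counting components\<close>

lemma compo_closed_eq:
  assumes "X \<subseteq> D" "x \<in> X" "\<And>a b. a \<in> X \<Longrightarrow> b \<in> D \<Longrightarrow> R a b \<Longrightarrow> b \<in> X"
  shows "compo R D x = compo R X x"
proof
  show "compo R D x \<subseteq> compo R X x"
  proof
    fix y assume "y \<in> compo R D x"
    then have "reach R D x y" unfolding compo_def by simp
    from reach_closed[OF this assms(2) assms(1) assms(3)] show "y \<in> compo R X x" unfolding compo_def by simp
  qed
  show "compo R X x \<subseteq> compo R D x"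
  proof
    fix y assume "y \<in> compo R X x"
    then have "y \<in> X" "reach R X x y" unfolding compo_def by simp_all
    then have "reach R D x y" using reach_mono[of R X x y R D] assms(1) by simp
    then show "y \<in> compo R D x" unfolding compo_def using \<open>y \<in> X\<close> assms(1) by auto
  qed
qed

lemma comps_split:
  assumes sym: "\<And>a b. R a b \<Longrightarrow> R b a" and fD: "finite D" and XD: "X \<subseteq> D"
    and cl: "\<And>a b. a \<in> X \<Longrightarrow> b \<in> D \<Longrightarrow> R a b \<Longrightarrow> b \<in> X"
  shows "card (comps R D) = card (comps R X) + card (comps R (D - X))"
proof -
  have cl2: "b \<in> D - X" if "a \<in> D - X" "b \<in> D" "R a b" for a b
  proof (rule ccontr)
    assume "b \<notin> D - X" then have "b \<in> X" using that(2) by simp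
    then have "a \<in> X" using cl[OF _ _ sym[OF that(3)]] that(1) by simp
    then show False using that(1) by simp
  qed
  have e1: "compo R D ` X = compo R X ` X"
    using compo_closed_eq[OF XD _ cl] by (rule image_cong[OF refl])
  have e2: "compo R D ` (D - X) = compo R (D - X) ` (D - X)"
  proof (rule image_cong[OF refl])
    fix x assume xx: "x \<in> D - X"
    show "compo R D x = compo R (D - X) x"
      by (rule compo_closed_eq[OF Diff_subset xx cl2])
  qed
  have "D = X \<union> (D - X)" using XD by auto
  then have "comps R D = compo R D ` X \<union> compo R D ` (D - X)" unfolding comps_compo by (metis image_Un)
  then have ceq: "comps R D = comps R X \<union> comps R (D - X)" unfolding e1 e2 comps_compo .
  have disj: "comps R X \<inter> comps R (D - X) = {}"
  proof (rule ccontr)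
    assume "comps R X \<inter> comps R (D - X) \<noteq> {}"
    then obtain K where K1: "K \<in> comps R X" and K2: "K \<in> comps R (D - X)" by blast
    from K1 obtain x where x: "x \<in> X" "K = compo R X x" unfolding comps_compo by blast
    from K2 obtain z where z: "z \<in> D - X" "K = compo R (D - X) z" unfolding comps_compo by blast
    have "x \<in> K" using x compo_self by metis
    then have "x \<in> D - X" using z(2) unfolding compo_def by simp
    then show False using x(1) by simp
  qed
  have f1: "finite (comps R X)" using fD XD finite_subset finite_comps by metis
  have f2: "finite (comps R (D - X))" using fD by (intro finite_comps) simp
  show ?thesis unfolding ceq using card_Un_disjoint[OF f1 f2 disj] .
qed

lemma comps_union_lt:
  assumes sym: "\<And>a b. R a b \<Longrightarrow> R b a" and fA: "finite A" and fB: "finite B"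
    and aA: "a \<in> A" and bB: "b \<in> B" and ab: "R a b"
  shows "card (comps R (A \<union> B)) < card (comps R A) + card (comps R B)"
proof -
  let ?AB = "A \<union> B"
  define phi where "phi K = {y \<in> ?AB. \<exists>x\<in>K. reach R ?AB x y}" for K
  have phiA: "phi (compo R A x) = compo R ?AB x" if "x \<in> A" for x
  proof
    show "phi (compo R A x) \<subseteq> compo R ?AB x"
    proof
      fix y assume "y \<in> phi (compo R A x)"
      then obtain z where "y \<in> ?AB" "z \<in> compo R A x" "reach R ?AB z y" unfolding phi_def by blast
      then have "reach R A x z" unfolding compo_def by simp
      then have "reach R ?AB x z" using reach_mono[of R A x z R ?AB] by simp
      then have "reach R ?AB x y" using \<open>reach R ?AB z y\<close> by (rule reach_trans)
      then show "y \<in> compo R ?AB x" unfolding compo_def using \<open>y \<in> ?AB\<close> by simp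
    qed
    show "compo R ?AB x \<subseteq> phi (compo R A x)"
      unfolding phi_def compo_def using that by auto
  qed
  have phiB: "phi (compo R B x) = compo R ?AB x" if "x \<in> B" for x
  proof
    show "phi (compo R B x) \<subseteq> compo R ?AB x"
    proof
      fix y assume "y \<in> phi (compo R B x)"
      then obtain z where "y \<in> ?AB" "z \<in> compo R B x" "reach R ?AB z y" unfolding phi_def by blast
      then have "reach R B x z" unfolding compo_def by simp
      then have "reach R ?AB x z" using reach_mono[of R B x z R ?AB] by simp
      then have "reach R ?AB x y" using \<open>reach R ?AB z y\<close> by (rule reach_trans)
      then show "y \<in> compo R ?AB x" unfolding compo_def using \<open>y \<in> ?AB\<close> by simp
    qed
    show "compo R ?AB x \<subseteq> phi (compo R B x)"
      unfolding phi_def compo_def using that by auto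
  qed
  have rab: "reach R ?AB a b" using aA bB ab by (intro reach_edge) auto
  have cab: "compo R ?AB a = compo R ?AB b" by (rule compo_eq[OF sym rab])
  have sub: "comps R ?AB \<subseteq> phi ` ((comps R A - {compo R A a}) \<union> comps R B)"
  proof
    fix K assume "K \<in> comps R ?AB"
    then obtain x where x: "x \<in> ?AB" "K = compo R ?AB x" unfolding comps_compo by blast
    show "K \<in> phi ` ((comps R A - {compo R A a}) \<union> comps R B)"
    proof (cases "x \<in> A")
      case True
      show ?thesis
      proof (cases "compo R A x = compo R A a")
        case True2: True
        have "K = phi (compo R B b)" using x(2) phiA[OF True] True2 phiA[OF aA] cab phiB[OF bB] by simp
        moreover have "compo R B b \<in> comps R B" by (rule compo_in_comps[OF bB])
        ultimately show ?thesis by blast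
      next
        case False
        have "K = phi (compo R A x)" using x(2) phiA[OF True] by simp
        moreover have "compo R A x \<in> comps R A" by (rule compo_in_comps[OF True])
        ultimately show ?thesis using False by blast
      qed
    next
      case False
      then have xB: "x \<in> B" using x(1) by simp
      have "K = phi (compo R B x)" using x(2) phiB[OF xB] by simp
      moreover have "compo R B x \<in> comps R B" by (rule compo_in_comps[OF xB])
      ultimately show ?thesis by blast
    qed
  qed
  have fA': "finite (comps R A)" using fA by (rule finite_comps)
  have fB': "finite (comps R B)" using fB by (rule finite_comps)
  have memA: "compo R A a \<in> comps R A" by (rule compo_in_comps[OF aA])
  have "card (comps R ?AB) \<le> card (phi ` ((comps R A - {compo R A a}) \<union> comps R B))"
    using sub fA' fB' by (intro card_mono) auto
  also have "\<dots> \<le> card ((comps R A - {compo R A a}) \<union> comps R B)" by (rule card_image_le) (use fA' fB' in auto)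
  also have "\<dots> \<le> card (comps R A - {compo R A a}) + card (comps R B)" by (rule card_Un_le)
  also have "card (comps R A - {compo R A a}) = card (comps R A) - 1" by (rule card_Diff_singleton[OF memA])
  finally have le: "card (comps R ?AB) \<le> card (comps R A) - 1 + card (comps R B)" .
  have "card (comps R A) \<noteq> 0" using fA' memA by auto
  then show ?thesis using le by linarith
qed


lemma connected_union:
  assumes sym: "\<And>a b. R a b \<Longrightarrow> R b a" and cA: "connected_on R A" and cB: "connected_on R B"
    and aA: "a \<in> A" and bB: "b \<in> B" and ab: "R a b"
  shows "connected_on R (A \<union> B)"
proof (rule connected_reach[OF sym])
  show "a \<in> A \<union> B" using aA by simp
  fix y assume "y \<in> A \<union> B"
  then show "reach R (A \<union> B) a y"
  proof
    assume "y \<in> A"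
    then have "reach R A a y" using cA aA unfolding connected_on_def by simp
    then show ?thesis using reach_mono[of R A a y R "A \<union> B"] by simp
  next
    assume "y \<in> B"
    then have "reach R B b y" using cB bB unfolding connected_on_def by simp
    then have 1: "reach R (A \<union> B) b y" using reach_mono[of R B b y R "A \<union> B"] by simp
    have 2: "reach R (A \<union> B) a b" using aA bB ab by (intro reach_edge) auto
    show ?thesis using reach_trans[OF 2 1] .
  qed
qed

lemma tedge_E:
  assumes sym: "\<And>a b. E a b \<Longrightarrow> E b a" and st: "spanning_tree E D T0" and t: "tedge T0 a b"
  shows "E a b"
proof -
  have "{a, b} \<in> T0" using t unfolding tedge_def by simp
  then obtain x y where xy: "{a, b} = {x, y}" "E x y" using st unfolding spanning_tree_def by blast
  from xy(1) have "(a = x \<and> b = y) \<or> (a = y \<and> b = x)" by (auto simp: doubleton_eq_iff)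
  then show ?thesis using xy(2) sym by auto
qed

lemma sum_less_two:
  fixes g g' :: "nat \<Rightarrow> nat"
  assumes "finite I" "i \<in> I" "j \<in> I" "i \<noteq> j" "\<And>l. l \<in> I \<Longrightarrow> l \<noteq> i \<Longrightarrow> l \<noteq> j \<Longrightarrow> g' l = g l"
    "g' i + g' j < g i + g j"
  shows "sum g' I < sum g I"
proof -
  have ji: "j \<in> I - {i}" using assms(3,4) by simp
  have f: "finite (I - {i})" using assms(1) by simp
  have "sum g I = g i + sum g (I - {i})" by (rule sum.remove[OF assms(1,2)])
  also have "sum g (I - {i}) = g j + sum g (I - {i} - {j})" by (rule sum.remove[OF f ji])
  finally have 1: "sum g I = g i + (g j + sum g (I - {i} - {j}))" .
  have "sum g' I = g' i + sum g' (I - {i})" by (rule sum.remove[OF assms(1,2)])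
  also have "sum g' (I - {i}) = g' j + sum g' (I - {i} - {j})" by (rule sum.remove[OF f ji])
  finally have 2: "sum g' I = g' i + (g' j + sum g' (I - {i} - {j}))" .
  have 3: "sum g' (I - {i} - {j}) = sum g (I - {i} - {j})" using assms(5) by (intro sum.cong) auto
  show ?thesis unfolding 1 2 3 using assms(6) by linarith
qed

lemma bcp_update:
  assumes bcp: "is_BCP V E k s P" and ik: "i < k" and jk: "j < k" and ij: "i \<noteq> j"
    and AB: "A \<union> B = P i \<union> P j" and dAB: "A \<inter> B = {}"
    and gA: "A \<noteq> {} \<and> connected_on E A \<and> \<bar>real (card A) - real (card V) / real k\<bar> \<le> s"
    and gB: "B \<noteq> {} \<and> connected_on E B \<and> \<bar>real (card B) - real (card V) / real k\<bar> \<le> s"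
  shows "is_BCP V E k s (P(i := A, j := B))"
proof -
  let ?P = "P(i := A, j := B)"
  have b1: "\<forall>l<k. P l \<noteq> {} \<and> P l \<subseteq> V \<and> connected_on E (P l)
              \<and> \<bar>real (card (P l)) - real (card V) / real k\<bar> \<le> s"
    and b2: "\<forall>l<k. \<forall>l'<k. l \<noteq> l' \<longrightarrow> P l \<inter> P l' = {}"
    and b3: "(\<Union>l<k. P l) = V" using bcp unfolding is_BCP_def by blast+
  have PiV: "P i \<subseteq> V" "P j \<subseteq> V" using b1 ik jk by blast+
  have AV: "A \<subseteq> V" "B \<subseteq> V" using AB PiV by blast+
  have c1: "\<forall>l<k. ?P l \<noteq> {} \<and> ?P l \<subseteq> V \<and> connected_on E (?P l)
              \<and> \<bar>real (card (?P l)) - real (card V) / real k\<bar> \<le> s"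
    using b1 gA gB AV ij by auto
  have dis: "?P l \<inter> ?P l' = {}" if "l < k" "l' < k" "l \<noteq> l'" for l l'
  proof -
    have o: "P m \<inter> (A \<union> B) = {}" if "m < k" "m \<noteq> i" "m \<noteq> j" for m
      unfolding AB using b2 that ik jk by blast
    show ?thesis
      using o[of l] o[of l'] b2 that dAB ij by (auto simp: Int_commute)
  qed
  have un: "(\<Union>l<k. ?P l) = V"
  proof
    show "(\<Union>l<k. ?P l) \<subseteq> V" using c1 by blast
    show "V \<subseteq> (\<Union>l<k. ?P l)"
    proof
      fix x assume "x \<in> V"
      then obtain l where l: "l < k" "x \<in> P l" using b3 by blast
      show "x \<in> (\<Union>l<k. ?P l)"
      proof (cases "l = i \<or> l = j")
        case True
        then have "x \<in> A \<or> x \<in> B" using l(2) AB by blast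
        then show ?thesis using ik jk ij by (metis UN_iff fun_upd_same fun_upd_other lessThan_iff)
      next
        case False
        then show ?thesis using l by (intro UN_I[of l]) auto
      qed
    qed
  qed
  show ?thesis unfolding is_BCP_def using c1 dis un by blast
qed


theorem mainTheorem5:
  fixes V :: "'a set" and E :: "'a \<Rightarrow> 'a \<Rightarrow> bool" and C :: "'a list"
    and k :: nat and s :: real and P :: "nat \<Rightarrow> 'a set"
    and T :: "nat \<Rightarrow> 'a set set" and c :: "nat \<Rightarrow> 'a"
  assumes "simple_graph V E"
    and "hamilton_cycle V E C"
    and "k \<ge> 2" and "k dvd card V"
    and "s \<ge> real (card V) / real k"
    and "is_BCP V E k s P"
    and "\<not> canonical C k P"
    and "\<forall>i < k. min_chord_spanning_tree E C (P i) (T i)"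
    and "\<forall>i < k. tree_center (P i) (T i) (c i)"
    and "\<exists>i < k. real (card (P i)) > real (card V) / real k
           \<and> (\<exists>F \<in> fragments C (P i). c i \<notin> F
                \<and> (\<exists>u \<in> F. \<exists>j < k. real (card (P j)) \<le> real (card V) / real k
                      \<and> (\<exists>v \<in> P j. cedge C u v)))"
  shows "\<exists>i j P'. recomb_move V E k s P i j P'
           \<and> total_fragments C k P' < total_fragments C k P"
proof -
  note sg = assms(1) and hc = assms(2) and sge = assms(5) and bcp = assms(6)
  let ?nk = "real (card V) / real k"
  obtain i F u j v where ik: "i < k" and big: "real (card (P i)) > ?nk"
    and F: "F \<in> fragments C (P i)" and cF: "c i \<notin> F" and uF: "u \<in> F" and jk: "j < k"
    and small: "real (card (P j)) \<le> ?nk" and vP: "v \<in> P j" and cuv: "cedge C u v"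
    using assms(10) by blast
  have ij: "i \<noteq> j" using big small by auto
  have b1: "\<forall>l<k. P l \<noteq> {} \<and> P l \<subseteq> V \<and> connected_on E (P l)
              \<and> \<bar>real (card (P l)) - ?nk\<bar> \<le> s"
    and b2: "\<forall>l<k. \<forall>l'<k. l \<noteq> l' \<longrightarrow> P l \<inter> P l' = {}"
    using bcp unfolding is_BCP_def by blast+
  have Esym: "\<And>a b. E a b \<Longrightarrow> E b a" using sg unfolding simple_graph_def by blast
  have fV: "finite V" using sg unfolding simple_graph_def by blast
  define D where "D = P i"
  define c0 where "c0 = c i"
  define T0 where "T0 = T i"
  have DV: "D \<subseteq> V" using b1 ik unfolding D_def by blast
  have fD: "finite D" using DV fV finite_subset by blast
  have Dj: "D \<inter> P j = {}" using b2 ik jk ij unfolding D_def by blast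
  have PjV: "P j \<subseteq> V" using b1 jk by blast
  have fPj: "finite (P j)" using PjV fV finite_subset by blast
  have vD: "v \<notin> D" using Dj vP by blast
  have DnV: "D \<noteq> V" using vD vP PjV by blast
  have mt: "min_chord_spanning_tree E C D T0" using assms(8) ik unfolding D_def T0_def by blast
  have st: "spanning_tree E D T0" using mt unfolding min_chord_spanning_tree_def by blast
  have tc: "tree_center D T0 c0" using assms(9) ik unfolding D_def T0_def c0_def by blast
  have c0D: "c0 \<in> D" using tc unfolding tree_center_def by blast
  have cbound: "\<And>K. K \<in> comps (tedge T0) (D - {c0}) \<Longrightarrow> real (card K) \<le> real (card D) / 2"
    using tc unfolding tree_center_def by blast
  have Dbal: "\<bar>real (card D) - ?nk\<bar> \<le> s" using b1 ik unfolding D_def by blast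
  have Dconn: "connected_on E D" using b1 ik unfolding D_def by blast
  define H where "H = compo (cedge C) D c0"
  have HD: "H \<subseteq> D" unfolding H_def compo_def by blast
  have c0H: "c0 \<in> H" unfolding H_def using c0D by (rule compo_self)
  have Hcl: "b \<in> H" if "a \<in> H" "b \<in> D" "cedge C a b" for a b
  proof -
    have "reach (cedge C) D c0 a" "a \<in> D" using that(1) unfolding H_def compo_def by simp_all
    then have "reach (cedge C) D c0 b" using reach_step that(2,3) by metis
    then show ?thesis unfolding H_def compo_def using that(2) by simp
  qed
  obtain x0 where x0: "x0 \<in> D" "F = compo (cedge C) D x0"
    using F unfolding fragments_def comps_compo D_def[symmetric] by blast
  have uD: "u \<in> D" using uF x0(2) unfolding compo_def by blast
  have uH: "u \<notin> H"
  proof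
    assume "u \<in> H"
    then have r1: "reach (cedge C) D c0 u" unfolding H_def compo_def by simp
    have r2: "reach (cedge C) D x0 u" using uF x0(2) unfolding compo_def by simp
    have "reach (cedge C) D x0 c0" using reach_trans[OF r2 reach_sym[OF cedge_sym r1]] .
    then have "c0 \<in> F" using x0(2) c0D unfolding compo_def by simp
    then show False using cF unfolding c0_def by simp
  qed
  define S' where "S' = compo (tedge T0) (D - H) u"
  have S'sub: "S' \<subseteq> D - H" unfolding S'_def compo_def by blast
  have uS': "u \<in> S'" unfolding S'_def using uD uH by (intro compo_self) simp
  have S'clT: "b \<in> S'" if "a \<in> S'" "b \<in> D - H" "tedge T0 a b" for a b
  proof -
    have "reach (tedge T0) (D - H) u a" "a \<in> D - H" using that(1) unfolding S'_def compo_def by simp_all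
    then have "reach (tedge T0) (D - H) u b" using reach_step that(2,3) by metis
    then show ?thesis unfolding S'_def compo_def using that(2) by simp
  qed
  have S'clC: "b \<in> S'" if "a \<in> S'" "b \<in> D" "cedge C a b" for a b
  proof -
    have aDH: "a \<in> D - H" using that(1) S'sub by blast
    have bH: "b \<notin> H"
    proof
      assume "b \<in> H"
      then have "a \<in> H" using Hcl[OF _ _ cedge_sym[OF that(3)]] aDH by blast
      then show False using aDH by blast
    qed
    have "{a, b} \<in> T0" using cedge_in_tree[OF sg hc DV DnV mt _ that(2) that(3)] aDH by blast
    moreover have "a \<noteq> b" using E_neq[OF sg cedge_E[OF sg hc that(3)]] .
    ultimately have "tedge T0 a b" unfolding tedge_def by simp
    then show ?thesis using S'clT[OF that(1)] that(2) bH by blast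
  qed
  have tE: "\<And>a b. tedge T0 a b \<Longrightarrow> E a b" using tedge_E[OF Esym st] by blast
  define K where "K = compo (tedge T0) (D - {c0}) u"
  have uc0: "u \<noteq> c0" using uH c0H by blast
  have KK: "K \<in> comps (tedge T0) (D - {c0})" unfolding K_def using uD uc0 by (intro compo_in_comps) simp
  have S'K: "S' \<subseteq> K"
  proof
    fix y assume "y \<in> S'"
    then have "y \<in> D - H" "reach (tedge T0) (D - H) u y" unfolding S'_def compo_def by simp_all
    moreover have "D - H \<subseteq> D - {c0}" using c0H by blast
    ultimately show "y \<in> K" unfolding K_def compo_def using reach_mono[of "tedge T0" "D - H" u y "tedge T0" "D - {c0}"] by blast
  qed
  have fK: "finite K" using fD unfolding K_def compo_def by simp
  have cS'K: "card S' \<le> card K" using card_mono[OF fK S'K] .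
  have cS': "real (card S') \<le> real (card D) / 2" using cbound[OF KK] cS'K by linarith
  have fS': "finite S'" using fK S'K finite_subset by blast
  have S'conn: "connected_on E S'"
  proof (rule connected_reach[OF Esym uS'])
    fix y assume "y \<in> S'"
    then have "reach (tedge T0) (D - H) u y" unfolding S'_def compo_def by simp
    from reach_closed[OF this uS' S'sub S'clT] have "reach (tedge T0) S' u y" by simp
    then show "reach E S' u y" using reach_mono[of "tedge T0" S' u y E S'] tE by blast
  qed
  define W where "W = D - S'"
  have HW: "H \<subseteq> W" unfolding W_def using HD S'sub by blast
  have fromH: "reach E W c0 x" if "x \<in> H" for x
  proof -
    have "reach (cedge C) D c0 x" using that unfolding H_def compo_def by simp
    from reach_closed[OF this c0H HD Hcl] have "reach (cedge C) H c0 x" by simp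
    then show ?thesis using reach_mono[of "cedge C" H c0 x E W] HW cedge_E[OF sg hc] by blast
  qed
  have toc0: "reach E W c0 x" if xW: "x \<in> W" for x
  proof (cases "x \<in> H")
    case True then show ?thesis by (rule fromH)
  next
    case False
    then have xDH: "x \<in> D - H" using xW unfolding W_def by blast
    have xS': "x \<notin> S'" using xW unfolding W_def by blast
    define X where "X = compo (tedge T0) (D - H) x"
    have xX: "x \<in> X" unfolding X_def using xDH by (rule compo_self)
    have XDH: "X \<subseteq> D - H" unfolding X_def compo_def by blast
    have Xcl: "b \<in> X" if "a \<in> X" "b \<in> D - H" "tedge T0 a b" for a b
    proof -
      have "reach (tedge T0) (D - H) x a" "a \<in> D - H" using that(1) unfolding X_def compo_def by simp_all
      then have "reach (tedge T0) (D - H) x b" using reach_step that(2,3) by metis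
      then show ?thesis unfolding X_def compo_def using that(2) by simp
    qed
    have "\<exists>a b. a \<in> X \<and> b \<in> D \<and> b \<notin> X \<and> tedge T0 a b"
    proof (rule ccontr)
      assume "\<not> ?thesis"
      then have "\<And>a b. a \<in> X \<Longrightarrow> b \<in> D \<Longrightarrow> tedge T0 a b \<Longrightarrow> b \<in> X" by blast
      moreover have "connected_on (tedge T0) D" using st unfolding spanning_tree_def by blast
      ultimately have "X = D" using connected_closed[of "tedge T0" D X x] XDH xX by blast
      then show False using c0D c0H XDH by blast
    qed
    then obtain a b where ab: "a \<in> X" "b \<in> D" "b \<notin> X" "tedge T0 a b" by blast
    have bH: "b \<in> H" using Xcl[OF ab(1) _ ab(4)] ab(2,3) by blast
    have XS': "X \<inter> S' = {}"
    proof (rule ccontr)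
      assume "X \<inter> S' \<noteq> {}"
      then obtain y where y: "y \<in> X" "y \<in> S'" by blast
      have r1: "reach (tedge T0) (D - H) x y" using y(1) unfolding X_def compo_def by simp
      have r2: "reach (tedge T0) (D - H) u y" using y(2) unfolding S'_def compo_def by simp
      have "reach (tedge T0) (D - H) u x" using reach_trans[OF r2 reach_sym[OF tedge_sym r1]] .
      then have "x \<in> S'" unfolding S'_def compo_def using xDH by simp
      then show False using xS' by simp
    qed
    have XW: "X \<subseteq> W" unfolding W_def using XDH XS' by blast
    have "reach (tedge T0) (D - H) x a" using ab(1) unfolding X_def compo_def by simp
    from reach_closed[OF this xX XDH Xcl] have "reach (tedge T0) X x a" by simp
    then have r1: "reach E W x a" using reach_mono[of "tedge T0" X x a E W] XW tE by blast
    have r2: "reach E W a b" using ab(1) XW bH HW tE[OF ab(4)] by (intro reach_edge) auto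
    have r3: "reach E W b c0" using reach_sym[OF Esym fromH[OF bH]] .
    have "reach E W x c0" using reach_trans[OF reach_trans[OF r1 r2] r3] .
    from reach_sym[of E W x c0, OF Esym this] show ?thesis .
  qed
  have c0W: "c0 \<in> W" using HW c0H by blast
  have Wconn: "connected_on E W" by (rule connected_reach[OF Esym c0W toc0])
  have Pjconn: "connected_on E (P j)" using b1 jk by blast
  have Bconn: "connected_on E (P j \<union> S')"
    by (rule connected_union[OF Esym Pjconn S'conn vP uS' Esym[OF cedge_E[OF sg hc cuv]]])
  have nks: "?nk \<le> s" using sge .
  have Wcard: "card W \<le> card D" unfolding W_def using fD by (simp add: card_mono)
  have Wr: "real (card W) \<le> real (card D)" using Wcard by simp
  have Wbal: "\<bar>real (card W) - ?nk\<bar> \<le> s"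
    unfolding abs_le_iff using Wr Dbal[unfolded abs_le_iff] nks of_nat_0_le_iff[of "card W"] by linarith
  have S'Pj: "S' \<inter> P j = {}" using S'sub Dj by blast
  have Bcard: "card (P j \<union> S') = card (P j) + card S'" using card_Un_disjoint[OF fPj fS'] S'Pj by blast
  have Bbal: "\<bar>real (card (P j \<union> S')) - ?nk\<bar> \<le> s"
  proof -
    have "real (card (P j \<union> S')) = real (card (P j)) + real (card S')" using Bcard by simp
    then show ?thesis unfolding abs_le_iff
      using small cS' Dbal[unfolded abs_le_iff] nks of_nat_0_le_iff[of "card (P j)"] of_nat_0_le_iff[of "card S'"]
      by linarith
  qed
  define P' where "P' = P(i := W, j := P j \<union> S')"
  have P'i: "P' i = W" unfolding P'_def using ij by simp
  have P'j: "P' j = P j \<union> S'" unfolding P'_def by simp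
  have P'o: "P' l = P l" if "l \<noteq> i" "l \<noteq> j" for l unfolding P'_def using that by simp
  have WB: "W \<union> (P j \<union> S') = P i \<union> P j" unfolding W_def D_def[symmetric] using S'sub by blast
  have WBd: "W \<inter> (P j \<union> S') = {}" unfolding W_def using Dj by blast
  have WNE: "W \<noteq> {}" using c0W by blast
  have BNE: "P j \<union> S' \<noteq> {}" using uS' by blast
  have bcp': "is_BCP V E k s P'" unfolding P'_def
    using bcp_update[OF bcp ik jk ij WB WBd] WNE Wconn Wbal BNE Bconn Bbal by blast
  have img: "P' ` {..<k} \<noteq> P ` {..<k}"
  proof
    assume h: "P' ` {..<k} = P ` {..<k}"
    have "P j \<union> S' \<in> P' ` {..<k}" using P'j jk by (metis imageI lessThan_iff)
    then obtain l where l: "l < k" "P j \<union> S' = P l" unfolding h by auto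
    show False
    proof (cases "l = j")
      case True
      then have "u \<in> P j" using l(2) uS' by blast
      then show ?thesis using uD Dj by blast
    next
      case False
      then have "P j \<inter> P l = {}" using b2 jk l(1) by blast
      then show ?thesis using l(2) vP by blast
    qed
  qed
  have move: "recomb_move V E k s P i j P'"
    unfolding recomb_move_def using ik jk ij P'i P'j WB P'o bcp' img by auto
  have S'Dsub: "S' \<subseteq> D" using S'sub by blast
  have splt: "card (comps (cedge C) D) = card (comps (cedge C) S') + card (comps (cedge C) (D - S'))"
    by (rule comps_split[of "cedge C", OF cedge_sym fD S'Dsub S'clC])
  have union: "card (comps (cedge C) (P j \<union> S')) < card (comps (cedge C) (P j)) + card (comps (cedge C) S')"
    by (rule comps_union_lt[of "cedge C", OF cedge_sym fPj fS' vP uS' cedge_sym[OF cuv]])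
  have "total_fragments C k P' < total_fragments C k P"
    unfolding total_fragments_def
  proof (rule sum_less_two[of "{..<k}" i j])
    show "finite {..<k}" by simp
    show "i \<in> {..<k}" "j \<in> {..<k}" using ik jk by simp_all
    show "i \<noteq> j" by (rule ij)
    show "card (fragments C (P' l)) = card (fragments C (P l))" if "l \<in> {..<k}" "l \<noteq> i" "l \<noteq> j" for l
      using P'o[OF that(2,3)] by simp
    show "card (fragments C (P' i)) + card (fragments C (P' j)) < card (fragments C (P i)) + card (fragments C (P j))"
      unfolding P'i P'j fragments_def W_def D_def[symmetric] using splt union by linarith
  qed
  then show ?thesis using move by blast
qed

end
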